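(* Let $K/\mathbb{Q}$ be a quadratic extension, and let $x_0,x_1,x_2,x_3\in K$, not all zero, be such that $x_i^2-x_{i-1}^2=x_j^2-x_{j-1}^2$ for all $i,j\in\{1,2,3\}$. Then $x_0\neq 0$; and if $q:=(x_1/x_0)^2-1$, then either $q=0$ or $\frac{(3q+2)^2}{q^2}\in\mathbb{Q}$. *)

theory Defs
  imports Complex_Main
begin

definition quadratic_ext_of_rat :: "'a::field_char_0 itself \<Rightarrow> bool" where
  "quadratic_ext_of_rat _ \<longleftrightarrow>
     vector_space.dim (\<lambda>(r::rat) (y::'a). of_rat r * y) (UNIV :: 'a set) = 2"

end

theory Submission
  imports Defs "HOL-Computational_Algebra.Nth_Powers"
begin


lemma coprime_primesI_int:
  fixes a b :: int
  assumes "a \<noteq> 0 \<or> b \<noteq> 0" "\<And>p. prime p \<Longrightarrow> p dvd a \<Longrightarrow> p dvd b \<Longrightarrow> False"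
  shows "coprime a b"
proof (rule ccontr)
  assume "\<not> coprime a b"
  then obtain c where c: "c dvd a" "c dvd b" "\<not> is_unit c" by (rule not_coprimeE)
  have "c \<noteq> 0" using c(1,2) assms(1) by auto
  then obtain p where "p dvd c" "prime p" using prime_divisor_exists c(3) by blast
  then show False using assms(2) c by (meson dvd_trans)
qed

lemma pow_coprime_int:
  fixes U V W :: int
  assumes "U > 0" "V > 0" "coprime U V" "U * V = W^n"
  shows "\<exists>m. U = m^n"
proof -
  have c: "coprime (nat U) (nat V)"
    using assms(1,2,3) by (metis coprime_int_iff int_nat_eq less_imp_le)
  have "int (nat U * nat V) = int (nat \<bar>W\<bar> ^ n)"
  proof -
    have "W^n > 0" using assms by (metis mult_pos_pos)
    thus ?thesis using assms by (simp add: power_abs[symmetric])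
  qed
  hence "nat U * nat V = nat \<bar>W\<bar> ^ n" by (metis of_nat_eq_iff)
  hence "is_nth_power n (nat U * nat V)" by simp
  hence "is_nth_power n (nat U)" using is_nth_power_mult_coprime_natD(1)[OF c] assms(1,2) by simp
  then obtain m where "nat U = m ^ n" by (auto elim: is_nth_powerE)
  hence "U = int m ^ n" using assms(1) by (metis int_nat_eq less_imp_le of_nat_power)
  thus ?thesis by blast
qed

lemma rat_sq_int:
  fixes V :: rat and N :: int
  assumes "V^2 = of_int N"
  shows "\<exists>k::int. V = of_int k"
proof -
  obtain a b where ab: "quotient_of V = (a, b)" by (cases "quotient_of V")
  have b: "b > 0" using quotient_of_denom_pos[OF ab] .
  have cop: "coprime a b" using quotient_of_coprime[OF ab] .
  have V: "V = of_int a / of_int b" using quotient_of_div[OF ab] .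
  have "(of_int a / of_int b)^2 = (of_int N :: rat)" using assms V by simp
  hence "of_int (a^2) = (of_int (N * b^2) :: rat)" using b by (simp add: field_simps power_divide)
  hence e: "a^2 = N * b^2" by (simp only: of_int_eq_iff)
  have "b dvd a^2" using e by simp
  moreover have "coprime b (a^2)" using cop by (simp add: coprime_commute)
  ultimately have "is_unit b" using coprime_common_divisor[of b "a^2" b] by simp
  hence "b = 1" using b by simp
  thus ?thesis using V by auto
qed

lemma four_contra: "4*(A::int) + 1 = 4*E + 3 \<Longrightarrow> False" by presburger

lemma odd_sq4: "odd (y::int) \<Longrightarrow> \<exists>A. y^2 = 4*A + 1"
proof -
  assume "odd y" then obtain t where "y = 2*t+1" by (rule oddE)
  hence "y^2 = 4*(t^2+t) + 1" by (simp add: power2_eq_square algebra_simps)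
  thus ?thesis by blast
qed

lemma sq_mod3: "\<not> 3 dvd (y::int) \<Longrightarrow> \<exists>A. y^2 = 3*A + 1"
proof -
  assume "\<not> 3 dvd y"
  hence "\<exists>k. y = 3*k+1 \<or> y = 3*k+2" by presburger
  then obtain k where "y = 3*k+1 \<or> y = 3*k+2" by blast
  thus ?thesis
  proof
    assume "y = 3*k+1"
    hence "y^2 = 3*(3*k^2+2*k) + 1" by (simp add: power2_eq_square algebra_simps)
    thus ?thesis by blast
  next
    assume "y = 3*k+2"
    hence "y^2 = 3*(3*k^2+4*k+1) + 1" by (simp add: power2_eq_square algebra_simps)
    thus ?thesis by blast
  qed
qed

lemma prime_int_not_unit: "prime (p::int) \<Longrightarrow> \<not> is_unit p" using not_prime_unit by blast

lemma coprime_prime_contra: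
  fixes x y p :: int
  assumes "coprime x y" "prime p" "p dvd x" "p dvd y" shows False
  using assms coprime_common_divisor prime_int_not_unit by metis

lemma step_odd:
  fixes x y z :: int
  assumes cop: "coprime x y" and eq: "z^2 = x^4 - x^2*y^2 + y^4"
    and ox: "odd x" and oy: "odd y" and nt: "x^2 \<noteq> y^2" and zpos: "z > 0"
  shows "\<exists>m n z'. coprime m n \<and> z'^2 = m^4 - m^2*n^2 + n^4 \<and> m \<noteq> 0 \<and> n \<noteq> 0
            \<and> m^2 \<noteq> n^2 \<and> 0 < z' \<and> z' < z"
proof -
  define S where "S = x^2 - y^2"
  define T where "T = x*y"
  have zST: "z^2 = S^2 + T^2" unfolding S_def T_def eq by (simp add: power2_eq_square power4_eq_xxxx algebra_simps)
  have oT: "odd T" using ox oy by (simp add: T_def)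
  have eS: "even S" using ox oy by (simp add: S_def)
  have S0: "S \<noteq> 0" using nt by (simp add: S_def)
  have oz: "odd z"
  proof -
    have "odd (S^2 + T^2)" using eS oT by simp
    hence "odd (z^2)" using zST by simp
    thus ?thesis by simp
  qed
  have "S^2 > 0" using S0 by simp
  hence "T^2 < z^2" using zST by linarith
  hence "\<bar>T\<bar>^2 < z^2" by simp
  hence Tz: "\<bar>T\<bar> < z" using zpos power_less_imp_less_base[of "\<bar>T\<bar>" 2 z] by simp
  have "even (z - T)" using oz oT by simp
  then obtain U where U: "z - T = 2*U" by (rule evenE)
  have "even (z + T)" using oz oT by simp
  then obtain V where V: "z + T = 2*V" by (rule evenE)
  obtain S1 where S1: "S = 2*S1" using eS by (rule evenE)
  have Upos: "U > 0" using U Tz by linarith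
  have Vpos: "V > 0" using V Tz by linarith
  have "4*(U*V) = z^2 - T^2"
  proof -
    have "4*(U*V) = (2*U)*(2*V)" by simp
    also have "\<dots> = (z-T)*(z+T)" using U V by simp
    finally show ?thesis by (simp add: power2_eq_square algebra_simps)
  qed
  hence UV: "U*V = S1^2" using zST S1 by (simp add: power2_eq_square)
  have copUV: "coprime U V"
  proof (rule coprime_primesI_int)
    show "U \<noteq> 0 \<or> V \<noteq> 0" using Upos by simp
  next
    fix p :: int assume p: "prime p" "p dvd U" "p dvd V"
    have "z = U + V" using U V by linarith
    hence pz: "p dvd z" using p by simp
    have "T = V - U" using U V by linarith
    hence pT: "p dvd T" using p by simp
    hence "p dvd x \<or> p dvd y" using p(1) by (simp add: T_def prime_dvd_mult_iff)
    thus False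
    proof
      assume px: "p dvd x"
      have "y^4 = z^2 - x^4 + x^2*y^2" using eq by simp
      moreover have "p dvd z^2 - x^4 + x^2*y^2" using px pz by (intro dvd_add dvd_diff) (auto simp: power2_eq_square power4_eq_xxxx)
      ultimately have "p dvd y^4" by simp
      hence "p dvd y" using p(1) prime_dvd_power by blast
      thus False using coprime_prime_contra[OF cop p(1) px] by simp
    next
      assume py: "p dvd y"
      have "x^4 = z^2 - y^4 + x^2*y^2" using eq by simp
      moreover have "p dvd z^2 - y^4 + x^2*y^2" using py pz by (intro dvd_add dvd_diff) (auto simp: power2_eq_square power4_eq_xxxx)
      ultimately have "p dvd x^4" by simp
      hence "p dvd x" using p(1) prime_dvd_power by blast
      thus False using coprime_prime_contra[OF cop p(1) _ py] by simp
    qed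
  qed
  obtain m where m: "U = m^2" using pow_coprime_int[OF Upos Vpos copUV UV] by blast
  obtain n where n: "V = n^2" using pow_coprime_int[OF Vpos Upos _ ] copUV UV
    by (metis coprime_commute mult.commute)
  have Tmn: "T = n^2 - m^2" using U V m n by linarith
  have S1mn: "S1^2 = m^2*n^2" using UV m n by simp
  have "even (x^2 + y^2)" using ox oy by simp
  then obtain z' where z': "x^2 + y^2 = 2*z'" by (rule evenE)
  have "4*z'^2 = S^2 + 4*T^2"
  proof -
    have "4*z'^2 = (x^2+y^2)^2" using z' by (simp add: power2_eq_square)
    also have "\<dots> = S^2 + 4*T^2" unfolding S_def T_def by (simp add: power2_eq_square power4_eq_xxxx algebra_simps)
    finally show ?thesis .
  qed
  hence "z'^2 = S1^2 + T^2" using S1 by (simp add: power2_eq_square)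
  hence zeq: "z'^2 = m^4 - m^2*n^2 + n^4" using Tmn S1mn by (simp add: power2_eq_square algebra_simps power4_eq_xxxx)
  have "coprime (m^2) (n^2)" using copUV m n by simp
  hence copmn: "coprime m n" by simp
  have m0: "m \<noteq> 0" using Upos m by auto
  have n0: "n \<noteq> 0" using Vpos n by auto
  have mn: "m^2 \<noteq> n^2" proof assume "m^2 = n^2" hence "T = 0" using Tmn by simp thus False using oT by simp qed
  have zp: "z' > 0"
  proof -
    have "x \<noteq> 0" using ox by auto
    hence "x^2 > 0" by simp
    hence "x^2 + y^2 > 0" by (simp add: add_pos_nonneg)
    thus ?thesis using z' by linarith
  qed
  have "z'^2 < z^2"
  proof -
    have "S1 \<noteq> 0" using S0 S1 by simp
    hence "S1^2 > 0" by simp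
    moreover have "z^2 = 4*S1^2 + T^2" using zST S1 by (simp add: power2_eq_square)
    moreover have "z'^2 = S1^2 + T^2" using \<open>z'^2 = S1^2 + T^2\<close> .
    ultimately show ?thesis by linarith
  qed
  hence "z' < z" using zpos power_less_imp_less_base[of z' 2 z] by simp
  thus ?thesis using copmn zeq m0 n0 mn zp by (intro exI[of _ m] exI[of _ n] exI[of _ z']) simp
qed

lemma sq_nonneg_eq: "(a::int)^2 = b^2 \<Longrightarrow> a \<ge> 0 \<Longrightarrow> b \<ge> 0 \<Longrightarrow> a = b"
  using power2_eq_iff_nonneg by blast

lemma prime_dvd_3: "prime (p::int) \<Longrightarrow> p dvd 3 \<Longrightarrow> p = 3"
proof -
  assume p: "prime p" "p dvd 3"
  have "p > 1" using p(1) prime_gt_1_int by blast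
  moreover have "p \<le> 3" using p(2) by (simp add: zdvd_imp_le)
  ultimately have "p = 2 \<or> p = 3" by auto
  thus ?thesis using p(2) by auto
qed

lemma prime_dvd_4: "prime (p::int) \<Longrightarrow> p dvd 4 \<Longrightarrow> p = 2"
proof -
  assume p: "prime p" "p dvd 4"
  have "p > 1" using p(1) prime_gt_1_int by blast
  have "p dvd 2^2" using p(2) by simp
  hence "p dvd 2" using p(1) prime_dvd_power by blast
  hence "p \<le> 2" by (simp add: zdvd_imp_le)
  thus ?thesis using \<open>p > 1\<close> by auto
qed

lemma step_even:
  fixes x y z :: int
  assumes cop: "coprime x y" and eq: "z^2 = x^4 - x^2*y^2 + y^4"
    and ex: "even x" and oy: "odd y" and x0: "x \<noteq> 0" and zpos: "z > 0"
  shows "\<exists>m n z'. coprime m n \<and> z'^2 = m^4 - m^2*n^2 + n^4 \<and> m \<noteq> 0 \<and> n \<noteq> 0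
            \<and> m^2 \<noteq> n^2 \<and> 0 < z' \<and> z' < z"
proof -
  obtain x1 where x1: "x = 2*x1" using ex by (rule evenE)
  have x10: "x1 \<noteq> 0" using x0 x1 by simp
  define e where "e = y^2 - 2*x1^2"
  have ze: "z^2 = e^2 + 12*x1^4" unfolding e_def eq x1
    by (simp add: power2_eq_square power4_eq_xxxx algebra_simps)
  have oe: "odd e" using oy by (simp add: e_def)
  have oz: "odd z"
  proof -
    have "odd (e^2 + 12*x1^4)" using oe by simp
    hence "odd (z^2)" using ze by simp
    thus ?thesis by simp
  qed
  have "x1^4 > 0" using x10 by simp
  hence "e^2 < z^2" using ze by linarith
  hence "\<bar>e\<bar>^2 < z^2" by simp
  hence ez: "\<bar>e\<bar> < z" using zpos power_less_imp_less_base[of "\<bar>e\<bar>" 2 z] by simp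
  have "even (z - e)" using oz oe by simp
  then obtain U where U: "z - e = 2*U" by (rule evenE)
  have "even (z + e)" using oz oe by simp
  then obtain V where V: "z + e = 2*V" by (rule evenE)
  have Upos: "U > 0" using U ez by linarith
  have Vpos: "V > 0" using V ez by linarith
  have zUV: "z = U + V" using U V by linarith
  have eUV: "e = V - U" using U V by linarith
  have "4*(U*V) = z^2 - e^2"
  proof -
    have "4*(U*V) = (2*U)*(2*V)" by simp
    also have "\<dots> = (z-e)*(z+e)" using U V by simp
    finally show ?thesis by (simp add: power2_eq_square algebra_simps)
  qed
  hence UV: "U*V = 3*x1^4" using ze by simp
  have copUV: "coprime U V"
  proof (rule coprime_primesI_int)
    show "U \<noteq> 0 \<or> V \<noteq> 0" using Upos by simp
  next
    fix p :: int assume p: "prime p" "p dvd U" "p dvd V"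
    have pe: "p dvd e" using p eUV by simp
    have "p dvd 3*x1^4" using p UV by (metis dvd_mult2)
    hence "p dvd 3 \<or> p dvd x1^4" using p(1) by (simp add: prime_dvd_mult_iff)
    hence "p dvd 3 \<or> p dvd x1" using p(1) prime_dvd_power by blast
    thus False
    proof
      assume px1: "p dvd x1"
      have "y^2 = e + 2*x1^2" by (simp add: e_def)
      moreover have "p dvd e + 2*x1^2" using pe px1 by (simp add: power2_eq_square)
      ultimately have "p dvd y^2" by simp
      hence "p dvd y" using p(1) prime_dvd_power by blast
      moreover have "p dvd x" using px1 x1 by simp
      ultimately show False using coprime_prime_contra[OF cop p(1)] by simp
    next
      assume "p dvd 3"
      hence p3: "p = 3" using p(1) prime_dvd_3 by blast
      have "\<not> 3 dvd y"
      proof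
        assume "3 dvd y"
        hence "3 dvd y^2" by (simp add: power2_eq_square)
        moreover have "2*x1^2 = y^2 - e" by (simp add: e_def)
        ultimately have "3 dvd 2*x1^2" using pe p3 by (metis dvd_diff)
        hence "3 dvd x1^2" by presburger
        hence "3 dvd x1" using prime_dvd_power[of "3::int" x1 2] by simp
        hence "3 dvd x" using x1 by simp
        thus False using coprime_prime_contra[OF cop, of 3] \<open>3 dvd y\<close> by simp
      qed
      then obtain A where A: "y^2 = 3*A + 1" using sq_mod3 by blast
      have "\<not> 3 dvd x1"
      proof
        assume "3 dvd x1"
        hence "3 dvd 2*x1^2" by (simp add: power2_eq_square)
        moreover have "y^2 = e + 2*x1^2" by (simp add: e_def)
        ultimately have "3 dvd y^2" using pe p3 by (metis dvd_add)
        hence "3 dvd y" using prime_dvd_power[of "3::int" y 2] by simp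
        moreover have "3 dvd x" using \<open>3 dvd x1\<close> x1 by simp
        ultimately show False using coprime_prime_contra[OF cop, of 3] by simp
      qed
      then obtain B where B: "x1^2 = 3*B + 1" using sq_mod3 by blast
      have "e = 3*(A - 2*B) - 1" using A B e_def by simp
      hence "3 dvd 3*(A - 2*B) - 1" using pe p3 by simp
      thus False by presburger
    qed
  qed
  have "3 dvd U*V" using UV by simp
  hence "3 dvd U \<or> 3 dvd V" using prime_dvd_mult_iff[of "3::int" U V] by simp
  thus ?thesis
  proof
    assume "3 dvd V"
    then obtain V1 where V1: "V = 3*V1" by blast
    have V1pos: "V1 > 0" using Vpos V1 by simp
    have UV1: "U*V1 = x1^4" using UV V1 by simp
    have cop1: "coprime U V1" using copUV V1 by simp
    obtain a where a: "U = a^4" using pow_coprime_int[OF Upos V1pos cop1 UV1] by blast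
    obtain b where b: "V1 = b^4" using pow_coprime_int[OF V1pos Upos _ ] cop1 UV1
      by (metis coprime_commute mult.commute)
    have "(x1^2)^2 = (a^2*b^2)^2" using UV1 a b
      by (simp add: power2_eq_square power4_eq_xxxx algebra_simps)
    hence xab: "x1^2 = a^2*b^2" by (rule sq_nonneg_eq) simp_all
    have yab: "y^2 = 3*b^4 - a^4 + 2*a^2*b^2"
      using e_def eUV V1 a b xab by simp
    have "odd (a^4 + 3*b^4)" using oz zUV a b V1 by simp
    hence par: "(odd a \<and> even b) \<or> (even a \<and> odd b)" by (cases "even a"; cases "even b") simp_all
    obtain A where A: "y^2 = 4*A + 1" using odd_sq4[OF oy] by blast
    from par have False
    proof
      assume "odd a \<and> even b"
      then obtain s u where s: "a = 2*s+1" and u: "b = 2*u" by (meson oddE evenE)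
      define E where "E = 12*u^4 - 4*(s^2+s)^2 - 2*(s^2+s) + 8*(s^2+s)*u^2 + 2*u^2 - 1"
      have "3*b^4 - a^4 + 2*a^2*b^2 = 4*E + 3"
        unfolding s u E_def by (simp add: power2_eq_square power4_eq_xxxx algebra_simps)
      hence h: "y^2 = 4*E + 3" using yab by (rule trans[rotated])
      have "4*A + 1 = 4*E + 3" by (simp only: A[symmetric] h)
      thus False by (rule four_contra)
    next
      assume "even a \<and> odd b"
      then obtain s u where s: "a = 2*s" and u: "b = 2*u+1" by (meson oddE evenE)
      define E where "E = 12*(u^2+u)^2 + 6*(u^2+u) - 4*s^4 + 8*s^2*(u^2+u) + 2*s^2"
      have "3*b^4 - a^4 + 2*a^2*b^2 = 4*E + 3"
        unfolding s u E_def by (simp add: power2_eq_square power4_eq_xxxx algebra_simps)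
      hence h: "y^2 = 4*E + 3" using yab by (rule trans[rotated])
      have "4*A + 1 = 4*E + 3" by (simp only: A[symmetric] h)
      thus False by (rule four_contra)
    qed
    thus ?thesis by blast
  next
    assume "3 dvd U"
    then obtain U1 where U1: "U = 3*U1" by blast
    have U1pos: "U1 > 0" using Upos U1 by simp
    have UV1: "V*U1 = x1^4" using UV U1 by (simp add: mult.commute)
    have cop1: "coprime V U1" using copUV U1 by (simp add: coprime_commute)
    obtain a where a: "V = a^4" using pow_coprime_int[OF Vpos U1pos cop1 UV1] by blast
    obtain b where b: "U1 = b^4" using pow_coprime_int[OF U1pos Vpos _ ] cop1 UV1
      by (metis coprime_commute mult.commute)
    have "(x1^2)^2 = (a^2*b^2)^2" using UV1 a b
      by (simp add: power2_eq_square power4_eq_xxxx algebra_simps)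
    hence xab: "x1^2 = a^2*b^2" by (rule sq_nonneg_eq) simp_all
    have b0: "b \<noteq> 0" using xab x10 by auto
    have a0: "a \<noteq> 0" using xab x10 by auto
    have copab: "coprime a b" using cop1 a b U1 by simp
    define P1 where "P1 = a^2 - b^2"
    define P2 where "P2 = a^2 + 3*b^2"
    have yab: "y^2 = P1 * P2"
    proof -
      have "y^2 = e + 2*x1^2" by (simp add: e_def)
      also have "\<dots> = a^4 - 3*b^4 + 2*a^2*b^2" using eUV a b U1 xab by simp
      also have "\<dots> = P1 * P2" unfolding P1_def P2_def
        by (simp add: power2_eq_square power4_eq_xxxx algebra_simps)
      finally show ?thesis .
    qed
    have oP: "odd (P1 * P2)"
    proof -
      have "odd (y^2)" using oy by simp
      thus ?thesis using yab by simp
    qed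
    have copP: "coprime P1 P2"
    proof (rule coprime_primesI_int)
      show "P1 \<noteq> 0 \<or> P2 \<noteq> 0" using oP by auto
    next
      fix p :: int assume p: "prime p" "p dvd P1" "p dvd P2"
      have "p dvd P1 * P2" using p(2) by simp
      have "odd p"
      proof
        assume "even p"
        hence "2 dvd P1 * P2" using \<open>p dvd P1 * P2\<close> by (rule dvd_trans)
        thus False using oP by simp
      qed
      have h1: "4*b^2 = P2 - P1" unfolding P1_def P2_def by simp
      have h2: "4*a^2 = 3*P1 + P2" unfolding P1_def P2_def by simp
      have "p dvd 4*b^2" using p h1 by simp
      hence "p dvd 4 \<or> p dvd b^2" using p(1) by (simp add: prime_dvd_mult_iff)
      hence pb: "p dvd 4 \<or> p dvd b" using p(1) prime_dvd_power by blast
      have "p dvd 4*a^2" using p h2 by simp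
      hence "p dvd 4 \<or> p dvd a^2" using p(1) by (simp add: prime_dvd_mult_iff)
      hence pa: "p dvd 4 \<or> p dvd a" using p(1) prime_dvd_power by blast
      show False
      proof (cases "p dvd 4")
        case True
        hence "p = 2" using prime_dvd_4 p(1) by blast
        thus False using \<open>odd p\<close> by simp
      next
        case False
        thus False using pa pb coprime_prime_contra[OF copab p(1)] by blast
      qed
    qed
    have P2pos: "P2 > 0" unfolding P2_def using b0 by (simp add: add_nonneg_pos)
    have "y \<noteq> 0" using oy by auto
    hence "y^2 > 0" by simp
    hence P1pos: "P1 > 0" using yab P2pos by (simp add: zero_less_mult_iff)
    obtain c0 where c0: "P1 = c0^2" using pow_coprime_int[OF P1pos P2pos copP yab[symmetric]] by blast
    have copP': "coprime P2 P1" using copP by (simp add: coprime_commute)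
    have yab': "P2 * P1 = y^2" using yab by (simp add: mult.commute)
    obtain d0 where d0: "P2 = d0^2" using pow_coprime_int[OF P2pos P1pos copP' yab'] by blast
    define c where "c = \<bar>c0\<bar>"
    define d where "d = \<bar>d0\<bar>"
    have c: "P1 = c^2" and d: "P2 = d^2" using c0 d0 by (simp_all add: c_def d_def)
    have cnn: "c \<ge> 0" and dnn: "d \<ge> 0" by (simp_all add: c_def d_def)
    have oc: "odd c" using oP c by simp
    have od: "odd d" using oP d by simp
    have eb: "even b"
    proof (rule ccontr)
      assume "odd b"
      have "odd (a^4 + 3*b^4)" using oz zUV a b U1 by simp
      hence "even a" using \<open>odd b\<close> by simp
      then obtain s where s: "a = 2*s" by (rule evenE)
      obtain u where u: "b = 2*u+1" using \<open>odd b\<close> by (rule oddE)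
      obtain A where A: "c^2 = 4*A + 1" using odd_sq4[OF oc] by blast
      define E where "E = s^2 - u^2 - u - 1"
      have "c^2 = 4*E + 3" using c unfolding P1_def s u E_def
        by (simp add: power2_eq_square algebra_simps)
      hence "4*A + 1 = 4*E + 3" using A by simp
      thus False by (rule four_contra)
    qed
    have dc: "d^2 - c^2 = 4*b^2" using c d unfolding P1_def P2_def by simp
    have "b^2 > 0" using b0 by simp
    hence "c^2 < d^2" using dc by linarith
    hence cd: "c < d" using dnn power_less_imp_less_base[of c 2 d] by simp
    have "even (d - c)" using oc od by simp
    then obtain M where M: "d - c = 2*M" by (rule evenE)
    have "even (d + c)" using oc od by simp
    then obtain N where N: "d + c = 2*N" by (rule evenE)
    have Mpos: "M > 0" using M cd by linarith
    have Npos: "N > 0" using N cd cnn by linarith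
    have "4*(M*N) = d^2 - c^2"
    proof -
      have "4*(M*N) = (2*M)*(2*N)" by simp
      also have "\<dots> = (d-c)*(d+c)" using M N by simp
      finally show ?thesis by (simp add: power2_eq_square algebra_simps)
    qed
    hence MN: "M*N = b^2" using dc by simp
    have copMN: "coprime M N"
    proof (rule coprime_primesI_int)
      show "M \<noteq> 0 \<or> N \<noteq> 0" using Mpos by simp
    next
      fix p :: int assume p: "prime p" "p dvd M" "p dvd N"
      have "c = N - M" using M N by linarith
      hence "p dvd c" using p by simp
      hence "p dvd P1" using c by (simp add: power2_eq_square)
      have "d = N + M" using M N by linarith
      hence "p dvd d" using p by simp
      hence "p dvd P2" using d by (simp add: power2_eq_square)
      show False using coprime_prime_contra[OF copP p(1) \<open>p dvd P1\<close> \<open>p dvd P2\<close>] .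
    qed
    obtain m where m: "M = m^2" using pow_coprime_int[OF Mpos Npos copMN MN] by blast
    obtain n where n: "N = n^2" using pow_coprime_int[OF Npos Mpos _ ] copMN MN
      by (metis coprime_commute mult.commute)
    have cmn: "c = n^2 - m^2" using M N m n by linarith
    have bmn: "b^2 = m^2*n^2" using MN m n by simp
    have aeq: "a^2 = m^4 - m^2*n^2 + n^4"
    proof -
      have "a^2 = P1 + b^2" unfolding P1_def by simp
      also have "\<dots> = (n^2-m^2)^2 + m^2*n^2" using c cmn bmn by simp
      also have "\<dots> = m^4 - m^2*n^2 + n^4" by (simp add: power2_eq_square power4_eq_xxxx algebra_simps)
      finally show ?thesis .
    qed
    have "\<bar>a\<bar>^2 = m^4 - m^2*n^2 + n^4" using aeq by simp
    have "coprime (m^2) (n^2)" using copMN m n by simp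
    hence copmn: "coprime m n" by simp
    have m0: "m \<noteq> 0" using Mpos m by auto
    have n0: "n \<noteq> 0" using Npos n by auto
    have mn: "m^2 \<noteq> n^2"
    proof
      assume "m^2 = n^2" hence "c = 0" using cmn by simp
      thus False using oc by simp
    qed
    have ap: "\<bar>a\<bar> > 0" using a0 by simp
    have "1 \<le> \<bar>a\<bar>" using a0 by linarith
    hence "\<bar>a\<bar> \<le> \<bar>a\<bar>^4" by (rule self_le_power) simp
    moreover have "\<bar>a\<bar>^4 = a^4" by (simp add: power_even_abs_numeral)
    ultimately have "\<bar>a\<bar> \<le> a^4" by simp
    moreover have "b^4 > 0" using b0 by simp
    moreover have "z = 3*b^4 + a^4" using zUV U1 a b by simp
    ultimately have az: "\<bar>a\<bar> < z" by linarith
    show ?thesis using copmn \<open>\<bar>a\<bar>^2 = m^4 - m^2*n^2 + n^4\<close> m0 n0 mn ap az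
      by (intro exI[of _ m] exI[of _ n] exI[of _ "\<bar>a\<bar>"]) simp
  qed
qed

lemma quartic_pos:
  fixes x y :: int
  assumes "y \<noteq> 0" shows "x^4 - x^2*y^2 + y^4 > 0"
proof -
  define Q where "Q = x^4 - x^2*y^2 + y^4"
  define R where "R = (2*x^2 - y^2)^2"
  define Y where "Y = y^4"
  have "4*Q = R + 3*Y" unfolding Q_def R_def Y_def
    by (simp add: power2_eq_square power4_eq_xxxx algebra_simps)
  moreover have "Y > 0" using assms by (simp add: Y_def)
  moreover have "R \<ge> 0" by (simp add: R_def)
  ultimately have "Q > 0" by linarith
  thus ?thesis by (simp add: Q_def)
qed

lemma euler_quartic:
  fixes x y z :: int
  assumes "coprime x y" "z^2 = x^4 - x^2*y^2 + y^4"
  shows "x = 0 \<or> y = 0 \<or> x^2 = y^2"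
proof -
  have "\<forall>x y z::int. nat \<bar>z\<bar> = k \<longrightarrow> coprime x y \<longrightarrow> z^2 = x^4 - x^2*y^2 + y^4
          \<longrightarrow> x = 0 \<or> y = 0 \<or> x^2 = y^2" for k
  proof (induction k rule: less_induct)
    case (less k)
    show ?case
    proof (intro allI impI)
      fix x y z :: int
      assume k: "nat \<bar>z\<bar> = k" and cop: "coprime x y" and eq: "z^2 = x^4 - x^2*y^2 + y^4"
      show "x = 0 \<or> y = 0 \<or> x^2 = y^2"
      proof (rule ccontr)
        assume nt: "\<not> (x = 0 \<or> y = 0 \<or> x^2 = y^2)"
        hence x0: "x \<noteq> 0" and y0: "y \<noteq> 0" and xy: "x^2 \<noteq> y^2" by auto
        have "z^2 > 0" using eq quartic_pos[OF y0, of x] by simp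
        hence zpos: "\<bar>z\<bar> > 0" by auto
        have eqa: "\<bar>z\<bar>^2 = x^4 - x^2*y^2 + y^4" using eq by simp
        have "\<not> (even x \<and> even y)"
        proof
          assume "even x \<and> even y"
          thus False using coprime_prime_contra[OF cop, of 2] by auto
        qed
        hence "(odd x \<and> odd y) \<or> (even x \<and> odd y) \<or> (odd x \<and> even y)" by auto
        hence "\<exists>m n z'. coprime m n \<and> z'^2 = m^4 - m^2*n^2 + n^4 \<and> m \<noteq> 0 \<and> n \<noteq> 0
            \<and> m^2 \<noteq> n^2 \<and> 0 < z' \<and> z' < \<bar>z\<bar>"
        proof (elim disjE conjE)
          assume "odd x" "odd y"
          thus ?thesis using step_odd[OF cop eqa _ _ xy zpos] by blast
        next
          assume "even x" "odd y"
          thus ?thesis using step_even[OF cop eqa _ _ x0 zpos] by blast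
        next
          assume "odd x" "even y"
          have cop': "coprime y x" using cop by (simp add: coprime_commute)
          have eqa': "\<bar>z\<bar>^2 = y^4 - y^2*x^2 + x^4" using eqa by (simp add: algebra_simps)
          show ?thesis using step_even[OF cop' eqa' \<open>even y\<close> \<open>odd x\<close> y0 zpos] by blast
        qed
        then obtain m n z' where mn: "coprime m n" "z'^2 = m^4 - m^2*n^2 + n^4" "m \<noteq> 0" "n \<noteq> 0"
            "m^2 \<noteq> n^2" "0 < z'" "z' < \<bar>z\<bar>" by blast
        have "nat \<bar>z'\<bar> < k" using mn(6,7) k by simp
        hence "m = 0 \<or> n = 0 \<or> m^2 = n^2" using less.IH mn(1,2) by blast
        thus False using mn(3,4,5) by blast
      qed
    qed
  qed
  thus ?thesis using assms by blast
qed

lemma euler_rat: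
  fixes w v :: rat
  assumes "w^4 - w^2 + 1 = v^2"
  shows "w = 0 \<or> w^2 = 1"
proof -
  obtain p q where pq: "quotient_of w = (p, q)" by (cases "quotient_of w")
  have q: "q > 0" using quotient_of_denom_pos[OF pq] .
  have cop: "coprime p q" using quotient_of_coprime[OF pq] .
  have w: "w = of_int p / of_int q" using quotient_of_div[OF pq] .
  have wq: "w * of_int q = of_int p" using w q by simp
  have eqv: "(v * of_int q^2)^2 = of_int (p^4 - p^2*q^2 + q^4)"
  proof -
  have "(v * of_int q^2)^2 = (w^4 - w^2 + 1) * of_int q^4" using assms
    by (simp add: power2_eq_square power4_eq_xxxx algebra_simps)
  also have "\<dots> = (w*of_int q)^4 - (w*of_int q)^2 * of_int q^2 + of_int q^4"
    by (simp add: power2_eq_square power4_eq_xxxx algebra_simps)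
  also have "\<dots> = of_int (p^4 - p^2*q^2 + q^4)" using wq by simp
  finally show ?thesis .
  qed
  obtain k where k: "v * of_int q^2 = of_int k" using rat_sq_int[OF eqv] by blast
  have "of_int (k^2) = (of_int (p^4 - p^2*q^2 + q^4) :: rat)"
    using k eqv by (metis of_int_power)
  hence "k^2 = p^4 - p^2*q^2 + q^4" by (simp only: of_int_eq_iff)
  hence "p = 0 \<or> q = 0 \<or> p^2 = q^2" using euler_quartic[OF cop] by simp
  thus ?thesis
  proof (elim disjE)
    assume "p = 0" thus ?thesis using w by simp
  next
    assume "q = 0" thus ?thesis using q by simp
  next
    assume "p^2 = q^2"
    hence "(of_int p)^2 = ((of_int q)^2 :: rat)" by (metis of_int_power)
    thus ?thesis using w q by (simp add: power_divide)
  qed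
qed

lemma ell_rat:
  fixes r s :: rat
  assumes "s^2 = (1+r)*(1+2*r)*(1+3*r)"
  shows "r = 0 \<or> r = -1 \<or> r = -1/2 \<or> r = -1/3 \<or> r = -2/3"
proof -
  define Z where "Z = 6*r + 3"
  define Y where "Y = 6*s"
  have YZ: "Y^2 = Z^3 + 2*Z^2 - 3*Z" unfolding Y_def Z_def using assms
    by (simp add: power2_eq_square power3_eq_cube algebra_simps)
  show ?thesis
  proof (cases "Z = 0")
    case True thus ?thesis by (simp add: Z_def)
  next
    case Z0: False
    define w where "w = Y / (2*Z)"
    define v where "v = (Z^2 + 3) / (4*Z)"
    have w2: "w^2 = (Z^3 + 2*Z^2 - 3*Z) / (4*Z^2)" unfolding w_def
      by (simp add: power_divide YZ[symmetric] power_mult_distrib)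
    have w4: "w^4 = (w^2)^2" by (simp add: power2_eq_square power4_eq_xxxx)
    have "w^4 - w^2 + 1 = v^2" unfolding w4 w2 v_def using Z0
      by (simp add: field_simps power2_eq_square power3_eq_cube)
    hence "w = 0 \<or> w^2 = 1" by (rule euler_rat)
    thus ?thesis
    proof
      assume "w = 0"
      hence "Y = 0" using Z0 by (simp add: w_def)
      have "Z * ((Z - 1) * (Z + 3)) = Z^3 + 2*Z^2 - 3*Z"
        by (simp add: power2_eq_square power3_eq_cube algebra_simps)
      hence "Z * ((Z - 1) * (Z + 3)) = 0" using YZ \<open>Y = 0\<close> by simp
      hence "Z - 1 = 0 \<or> Z + 3 = 0" using Z0 by simp
      hence "r = -1/3 \<or> r = -1" unfolding Z_def by linarith
      thus ?thesis by blast
    next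
      assume "w^2 = 1"
      hence "Z^3 + 2*Z^2 - 3*Z = 4*Z^2" using w2 Z0 by (simp add: field_simps)
      moreover have "Z * ((Z - 3) * (Z + 1)) = Z^3 + 2*Z^2 - 3*Z - 4*Z^2"
        by (simp add: power2_eq_square power3_eq_cube algebra_simps)
      ultimately have "Z * ((Z - 3) * (Z + 1)) = 0" by simp
      hence "Z - 3 = 0 \<or> Z + 1 = 0" using Z0 by simp
      hence "r = 0 \<or> r = -2/3" unfolding Z_def by linarith
      thus ?thesis by blast
    qed
  qed
qed

lemma int_sq_ne:
  fixes k :: int
  shows "k^2 \<noteq> 2" "k^2 \<noteq> 3" "k^2 \<noteq> 6"
proof -
  have "\<bar>k\<bar> < 3 \<or> k^2 \<ge> 9"
  proof (cases "\<bar>k\<bar> < 3")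
    case False
    hence "3^2 \<le> \<bar>k\<bar>^2" by (intro power_mono) auto
    thus ?thesis by simp
  qed simp
  hence "k^2 \<ge> 9 \<or> k = -2 \<or> k = -1 \<or> k = 0 \<or> k = 1 \<or> k = 2" by auto
  thus "k^2 \<noteq> 2" "k^2 \<noteq> 3" "k^2 \<noteq> 6" by auto
qed

lemma rat_sq_ne:
  fixes t :: rat
  shows "t^2 \<noteq> 2" "t^2 \<noteq> 3" "t^2 \<noteq> 6"
proof -
  { fix n :: int assume "t^2 = of_int n"
    then obtain k where k: "t = of_int k" using rat_sq_int by blast
    hence "of_int (k^2) = (of_int n :: rat)" using \<open>t^2 = of_int n\<close> by simp
    hence "k^2 = n" by (simp only: of_int_eq_iff)
    hence "\<exists>k::int. k^2 = n" by blast }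
  note h = this
  show "t^2 \<noteq> 2" using h[of 2] int_sq_ne(1) by fastforce
  show "t^2 \<noteq> 3" using h[of 3] int_sq_ne(2) by fastforce
  show "t^2 \<noteq> 6" using h[of 6] int_sq_ne(3) by fastforce
qed

lemma rat_sq_mult_ne:
  fixes u v :: rat and c :: rat
  assumes "u^2 = c * v^2" "c = 2 \<or> c = 3 \<or> c = 6"
  shows "v = 0"
proof (rule ccontr)
  assume v0: "v \<noteq> 0"
  have "(u/v)^2 = c" using assms(1) v0 by (simp add: power_divide)
  thus False using assms(2) rat_sq_ne by auto
qed



locale qconj =
  fixes \<sigma> :: "'a::field_char_0 \<Rightarrow> 'a"
  assumes s_add: "\<sigma> (x + y) = \<sigma> x + \<sigma> y"
    and s_mult: "\<sigma> (x * y) = \<sigma> x * \<sigma> y"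
    and s_invol: "\<sigma> (\<sigma> x) = x"
    and s_fix: "\<sigma> x = x \<longleftrightarrow> x \<in> \<rat>"
begin

lemma s_rat: "x \<in> \<rat> \<Longrightarrow> \<sigma> x = x" using s_fix by blast
lemma s_Rats: "\<sigma> x = x \<Longrightarrow> x \<in> \<rat>" using s_fix by blast
lemma s_0 [simp]: "\<sigma> 0 = 0" by (rule s_rat) simp
lemma s_1 [simp]: "\<sigma> 1 = 1" by (rule s_rat) simp
lemma s_numeral [simp]: "\<sigma> (numeral n) = numeral n" by (rule s_rat) simp
lemma s_of_rat [simp]: "\<sigma> (of_rat r) = of_rat r" by (rule s_rat) simp
lemma s_minus [simp]: "\<sigma> (- x) = - \<sigma> x"
proof -
  have "\<sigma> x + \<sigma> (-x) = 0" using s_add[of x "-x"] by simp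
  thus ?thesis by (simp add: eq_neg_iff_add_eq_0 add.commute)
qed
lemma s_diff [simp]: "\<sigma> (x - y) = \<sigma> x - \<sigma> y"
  using s_add[of x "-y"] by simp
lemma s_add' [simp]: "\<sigma> (x + y) = \<sigma> x + \<sigma> y" by (rule s_add)
lemma s_mult' [simp]: "\<sigma> (x * y) = \<sigma> x * \<sigma> y" by (rule s_mult)
lemma s_invol' [simp]: "\<sigma> (\<sigma> x) = x" by (rule s_invol)
lemma s_eq0_iff [simp]: "\<sigma> x = 0 \<longleftrightarrow> x = 0"
  by (metis s_0 s_invol)
lemma s_inverse [simp]: "\<sigma> (inverse x) = inverse (\<sigma> x)"
proof (cases "x = 0")
  case True thus ?thesis by simp
next
  case False
  have "\<sigma> x * \<sigma> (inverse x) = 1" using s_mult[of x "inverse x"] False by simp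
  thus ?thesis using False by (simp add: inverse_unique)
qed
lemma s_divide [simp]: "\<sigma> (x / y) = \<sigma> x / \<sigma> y"
  by (simp add: divide_inverse)
lemma s_power [simp]: "\<sigma> (x ^ n) = (\<sigma> x) ^ n"
  by (induction n) simp_all

lemma rats_sq_contra:
  fixes u v :: 'a
  assumes "u \<in> \<rat>" "v \<in> \<rat>" "u^2 = of_rat c * v^2" "c = 2 \<or> c = 3 \<or> c = 6"
  shows "v = 0"
proof -
  obtain u' where u: "u = of_rat u'" using assms(1) by (auto elim: Rats_cases)
  obtain v' where v: "v = of_rat v'" using assms(2) by (auto elim: Rats_cases)
  have "of_rat (u'^2) = (of_rat (c * v'^2) :: 'a)" using assms(3) u v by (simp add: of_rat_mult of_rat_power)
  hence "u'^2 = c * v'^2" by (simp only: of_rat_eq_iff)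
  hence "v' = 0" using rat_sq_mult_ne assms(4) by blast
  thus ?thesis using v by simp
qed

lemma rats_sign_contra:
  fixes u v :: 'a
  assumes "u \<in> \<rat>" "v \<in> \<rat>" "- (u^2) = of_rat (3/4) * v^2"
  shows "v = 0"
proof -
  obtain u' where u: "u = of_rat u'" using assms(1) by (auto elim: Rats_cases)
  obtain v' where v: "v = of_rat v'" using assms(2) by (auto elim: Rats_cases)
  have "of_rat (- (u'^2)) = (of_rat (3/4 * v'^2) :: 'a)" using assms(3) unfolding u v by (simp only: of_rat_mult of_rat_power of_rat_minus)
  hence e: "- (u'^2) = 3/4 * v'^2" by (simp only: of_rat_eq_iff)
  have "u'^2 \<ge> 0" "v'^2 \<ge> 0" by simp_all
  hence "v'^2 = 0" using e by linarith
  thus ?thesis using v by simp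
qed

lemma no_sqrt23:
  fixes s t :: 'a
  assumes s: "s^2 = 2" and t: "t^2 = 3" shows False
proof -
  have ss: "\<sigma> s = -s"
  proof -
    have "(\<sigma> s)^2 = 2" using arg_cong[OF s, of \<sigma>] by simp
    hence "(\<sigma> s - s) * (\<sigma> s + s) = 0" using s by (simp add: algebra_simps power2_eq_square)
    moreover have "\<sigma> s \<noteq> s"
    proof
      assume "\<sigma> s = s"
      hence "s \<in> \<rat>" by (rule s_Rats)
      hence "(1::'a) = 0" using rats_sq_contra[of s 1 2] s by simp
      thus False by simp
    qed
    ultimately show ?thesis by (simp add: eq_neg_iff_add_eq_0)
  qed
  have tt: "\<sigma> t = -t"
  proof -
    have "(\<sigma> t)^2 = 3" using arg_cong[OF t, of \<sigma>] by simp
    hence "(\<sigma> t - t) * (\<sigma> t + t) = 0" using t by (simp add: algebra_simps power2_eq_square)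
    moreover have "\<sigma> t \<noteq> t"
    proof
      assume "\<sigma> t = t"
      hence "t \<in> \<rat>" by (rule s_Rats)
      hence "(1::'a) = 0" using rats_sq_contra[of t 1 3] t by simp
      thus False by simp
    qed
    ultimately show ?thesis by (simp add: eq_neg_iff_add_eq_0)
  qed
  have "\<sigma> (s*t) = s*t" using ss tt by simp
  hence "s*t \<in> \<rat>" by (rule s_Rats)
  moreover have "(s*t)^2 = 6" using s t by (simp add: power_mult_distrib)
  ultimately have "(1::'a) = 0" using rats_sq_contra[of "s*t" 1 6] by simp
  thus False by simp
qed


lemma key:
  fixes a b c q :: 'a
  assumes a2: "a^2 = 1 + q" and b2: "b^2 = 1 + 2*q" and c2: "c^2 = 1 + 3*q" and nq: "q \<notin> \<rat>"
  shows "3 * q * \<sigma> q + q + \<sigma> q = 0"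
proof -
  define q' where "q' = \<sigma> q"
  have qq': "q - q' \<noteq> 0" using nq s_Rats unfolding q'_def by force
  define f where "f = (\<lambda>X::'a. (1+X)*(1+2*X)*(1+3*X))"
  define y where "y = a*b*c"
  have y2: "y^2 = f q" unfolding y_def f_def by (simp add: power_mult_distrib a2 b2 c2)
  define y' where "y' = \<sigma> y"
  have y'2: "y'^2 = f q'"
  proof -
    have "\<sigma> (y^2) = \<sigma> (f q)" using y2 by simp
    thus ?thesis unfolding y'_def q'_def f_def by simp
  qed
  define m where "m = (y - y') / (q - q')"
  have mq: "m * (q - q') = y - y'" unfolding m_def using qq' by simp
  have sm: "\<sigma> m = m"
  proof -
    have "\<sigma> m = (y' - y) / (q' - q)" unfolding m_def y'_def q'_def by simp
    also have "\<dots> = m" unfolding m_def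
      by (metis minus_diff_eq divide_minus_left divide_minus_right minus_minus)
    finally show ?thesis .
  qed
  define k where "k = y - m*q"
  have y'mk: "y' = m*q' + k" using mq unfolding k_def by (simp add: algebra_simps)
  have ymk: "y = m*q + k" unfolding k_def by simp
  have sk: "\<sigma> k = k"
  proof -
    have "\<sigma> k = y' - m * q'" unfolding k_def using sm by (simp add: y'_def q'_def)
    thus ?thesis using y'mk by simp
  qed
  define r where "r = (m^2 - 11)/6 - q - q'"
  have r6: "11 - m^2 + 6*(q+q'+r) = 0" unfolding r_def by (simp add: field_simps)
  have sr: "\<sigma> r = r" unfolding r_def using sm by (simp add: q'_def)
  define A where "A = 6 - 2*m*k - 6*(q*q' + q*r + q'*r)"
  define B where "B = 1 - k^2 + 6*q*q'*r"
  have poly0: "f X - (m*X+k)^2 - 6*(X-q)*(X-q')*(X-r) - (A*X + B) = X^2 * (11 - m^2 + 6*(q+q'+r))" for X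
    unfolding f_def A_def B_def by (simp add: algebra_simps power2_eq_square)
  have poly: "f X - (m*X+k)^2 - 6*(X-q)*(X-q')*(X-r) = A*X + B" for X
    using poly0[of X] r6 by simp
  have Aq: "A*q + B = 0" using poly[of q] y2 ymk by simp
  have Aq': "A*q' + B = 0" using poly[of q'] y'2 y'mk by simp
  have "A * (q - q') = (A*q + B) - (A*q' + B)" by (simp add: algebra_simps)
  hence "A * (q - q') = 0" using Aq Aq' by simp
  hence A0: "A = 0" using qq' by simp
  hence B0: "B = 0" using Aq by simp
  have fr: "f X - (m*X+k)^2 = 6*(X-q)*(X-q')*(X-r)" for X using poly[of X] A0 B0 by simp
  have rR: "r \<in> \<rat>" using sr by (rule s_Rats)
  have mR: "m \<in> \<rat>" using sm by (rule s_Rats)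
  have kR: "k \<in> \<rat>" using sk by (rule s_Rats)
  obtain r0 where r0: "r = of_rat r0" using rR by (auto elim: Rats_cases)
  obtain m0 where m0: "m = of_rat m0" using mR by (auto elim: Rats_cases)
  obtain k0 where k0: "k = of_rat k0" using kR by (auto elim: Rats_cases)
  have "f r = (m*r+k)^2" using fr[of r] by simp
  hence "of_rat ((1+r0)*(1+2*r0)*(1+3*r0)) = (of_rat ((m0*r0+k0)^2) :: 'a)"
    unfolding f_def r0 m0 k0 by (simp add: of_rat_add of_rat_mult of_rat_power)
  hence "(m0*r0+k0)^2 = (1+r0)*(1+2*r0)*(1+3*r0)" by (simp only: of_rat_eq_iff)
  hence rcases: "r0 = 0 \<or> r0 = -1 \<or> r0 = -1/2 \<or> r0 = -1/3 \<or> r0 = -2/3" by (rule ell_rat)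
  define na where "na = a * \<sigma> a"
  have naR: "na \<in> \<rat>" unfolding na_def by (rule s_Rats) (simp add: mult.commute)
  have na2: "na^2 = (1+q)*(1+q')"
  proof -
    have "(\<sigma> a)^2 = 1 + q'" using arg_cong[OF a2, of \<sigma>] unfolding q'_def by simp
    thus ?thesis unfolding na_def using a2 by (simp add: power_mult_distrib)
  qed
  have a0: "a \<noteq> 0"
  proof
    assume "a = 0" hence "q = -1" using a2 by (simp add: eq_neg_iff_add_eq_0 add.commute)
    thus False using nq by simp
  qed
  have na0: "na \<noteq> 0" unfolding na_def using a0 by simp
  define nb where "nb = b * \<sigma> b"
  have nbR: "nb \<in> \<rat>" unfolding nb_def by (rule s_Rats) (simp add: mult.commute)
  have nb2: "nb^2 = (1+2*q)*(1+2*q')"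
  proof -
    have "(\<sigma> b)^2 = 1 + 2*q'" using arg_cong[OF b2, of \<sigma>] unfolding q'_def by simp
    thus ?thesis unfolding nb_def using b2 by (simp add: power_mult_distrib)
  qed
  have b0: "b \<noteq> 0"
  proof
    assume "b = 0" hence "q = -1/2" using b2 by (simp add: field_simps) (simp add: algebra_simps eq_neg_iff_add_eq_0)
    thus False using nq by simp
  qed
  have nb0: "nb \<noteq> 0" unfolding nb_def using b0 by simp
  have kmR: "k - m \<in> \<rat>" using kR mR by simp
  have fm1: "(k - m)^2 = - 6*(-1-r) * na^2"
    using fr[of "-1"] unfolding f_def na2 by (simp add: algebra_simps power2_eq_square)
  from rcases show ?thesis
  proof (elim disjE)
    assume "r0 = 0" hence "r = 0" using r0 by simp
    hence "(k - m)^2 = of_rat 6 * na^2" using fm1 by simp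
    hence "na = 0" using rats_sq_contra[OF kmR naR, where c=6] by simp
    thus ?thesis using na0 by simp
  next
    assume "r0 = -1/2" hence "r = -1/2" using r0 by (simp add: of_rat_minus of_rat_divide)
    hence "(k - m)^2 = of_rat 3 * na^2" using fm1 by simp
    hence "na = 0" using rats_sq_contra[OF kmR naR, where c=3] by simp
    thus ?thesis using na0 by simp
  next
    assume "r0 = -2/3" hence "r = -2/3" using r0 by (simp add: of_rat_minus of_rat_divide)
    hence "(k - m)^2 = of_rat 2 * na^2" using fm1 by simp
    hence "na = 0" using rats_sq_contra[OF kmR naR, where c=2] by simp
    thus ?thesis using na0 by simp
  next
    assume "r0 = -1" hence "r = -1" using r0 by simp
    have "- ((k - m/2)^2) = of_rat (3/4) * nb^2"
      using fr[of "-1/2"] \<open>r = -1\<close> unfolding f_def nb2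
      by (simp add: of_rat_divide algebra_simps power2_eq_square)
    moreover have "k - m/2 \<in> \<rat>" using kR mR by simp
    ultimately have "nb = 0" using rats_sign_contra[OF _ nbR] by blast
    thus ?thesis using nb0 by simp
  next
    assume "r0 = -1/3" hence r3: "r = -1/3" using r0 by (simp add: of_rat_minus of_rat_divide)
    have "(k - m/3)^2 = 0"
      using fr[of "-1/3"] r3 unfolding f_def by (simp add: algebra_simps power2_eq_square)
    hence km: "k = m/3" by simp
    have "B = 1 - m^2/9 - 2*q*q'" unfolding B_def r3 km by (simp add: power_divide field_simps)
    hence e1: "1 - m^2/9 - 2*q*q' = 0" using B0 by (metis)
    have e2: "6*(q+q') = m^2 - 9" using r6 r3 by (simp add: algebra_simps)
    have "6*(3*q*q' + q + q') = -9*(1 - m^2/9 - 2*q*q') + (6*(q+q') - (m^2 - 9))"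
      by (simp add: field_simps)
    also have "\<dots> = 0" by (simp only: e1 e2) simp
    finally have "6*(3*q*q' + q + q') = 0" .
    moreover have "(6::'a) \<noteq> 0" by simp
    ultimately have "3*q*q' + q + q' = 0" by (metis mult_eq_0_iff)
    thus ?thesis unfolding q'_def .
  qed
qed

end


lemma quad_basis:
  assumes "quadratic_ext_of_rat TYPE('a::field_char_0)"
  shows "\<exists>w0::'a. w0 \<notin> \<rat> \<and> (\<forall>x. \<exists>a b. a \<in> \<rat> \<and> b \<in> \<rat> \<and> x = a + b * w0)"
proof -
  interpret V: vector_space "\<lambda>(r::rat) (y::'a). of_rat r * y"
    by unfold_locales (simp_all add: algebra_simps of_rat_add of_rat_mult)
  have dim2: "V.dim (UNIV::'a set) = 2" using assms by (simp add: quadratic_ext_of_rat_def)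
  obtain B where B: "V.independent B" "UNIV \<subseteq> V.span B" "card B = V.dim (UNIV::'a set)"
    using V.basis_exists[of "UNIV::'a set"] by blast
  have cB: "card B = 2" using B(3) dim2 by simp
  hence fB: "finite B" by (metis card.infinite zero_neq_numeral)
  have span1: "V.span {1::'a} = \<rat>" unfolding V.span_singleton Rats_def by auto
  have ind1: "V.independent {1::'a}" by simp
  obtain w0 :: 'a where w0: "w0 \<notin> \<rat>"
  proof (rule ccontr)
    assume "\<not> thesis"
    hence all: "\<forall>x::'a. x \<in> \<rat>" using that by blast
    have "V.span {1::'a} = V.span UNIV" using all span1 by (auto simp add: V.span_UNIV)
    hence "V.dim (UNIV::'a set) = card {1::'a}" using V.dim_eq_card[OF _ ind1] by simp
    thus False using dim2 by simp
  qed
  have ind2: "V.independent {w0, 1}"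
    using V.independent_insertI[OF _ ind1, of w0] w0 span1 by simp
  have rep: "x \<in> V.span {w0, 1}" for x
  proof (rule ccontr)
    assume nx: "x \<notin> V.span {w0, 1}"
    have ind3: "V.independent {x, w0, 1}" using V.independent_insertI[OF nx ind2] .
    have "x \<noteq> w0" "x \<noteq> 1" using nx V.span_base[of _ "{w0,1}"] by auto
    moreover have "w0 \<noteq> 1" using w0 by auto
    ultimately have "card {x, w0, 1} = 3" by simp
    moreover have "card {x, w0, 1} \<le> card B"
      using V.independent_span_bound[OF fB ind3] B(2) by auto
    ultimately show False using cB by simp
  qed
  have "\<exists>a b. a \<in> \<rat> \<and> b \<in> \<rat> \<and> x = a + b * w0" for x
  proof -
    obtain k where "x - of_rat k * w0 \<in> V.span {1}" using rep[of x] unfolding V.span_insert by blast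
    hence "x - of_rat k * w0 \<in> \<rat>" using span1 by simp
    thus ?thesis by (intro exI[of _ "x - of_rat k * w0"] exI[of _ "of_rat k"]) simp
  qed
  thus ?thesis using w0 by blast
qed

lemma quad_conj:
  assumes "quadratic_ext_of_rat TYPE('a::field_char_0)"
  shows "\<exists>\<sigma>::'a\<Rightarrow>'a. qconj \<sigma>"
proof -
  obtain w0 :: 'a where w0: "w0 \<notin> \<rat>" and rep0: "\<forall>x. \<exists>a b. a \<in> \<rat> \<and> b \<in> \<rat> \<and> x = a + b*w0"
    using quad_basis[OF assms] by blast
  obtain a0 b0 where ab0: "a0 \<in> \<rat>" "b0 \<in> \<rat>" "w0*w0 = a0 + b0*w0" using rep0 by blast
  define w where "w = w0 - b0/2"
  define D where "D = a0 + b0^2/4"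
  have "w*w = w0*w0 - b0*w0 + b0^2/4" unfolding w_def by (simp add: power2_eq_square field_simps)
  hence wD: "w*w = D" unfolding D_def using ab0(3) by simp
  have DR: "D \<in> \<rat>" unfolding D_def using ab0 by simp
  have wR: "w \<notin> \<rat>"
  proof
    assume "w \<in> \<rat>"
    hence "w + b0/2 \<in> \<rat>" using ab0 by simp
    thus False using w0 by (simp add: w_def)
  qed
  have w_nz: "w \<noteq> 0" using wR by auto
  have rep: "\<exists>a b. a \<in> \<rat> \<and> b \<in> \<rat> \<and> x = a + b*w" for x
  proof -
    obtain a b where ab: "a \<in> \<rat>" "b \<in> \<rat>" "x = a + b*w0" using rep0 by blast
    have "x = (a + b*b0/2) + b*w" unfolding ab(3) w_def by (simp add: field_simps)
    moreover have "a + b*b0/2 \<in> \<rat>" using ab ab0 by simp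
    ultimately show ?thesis using ab(2) by blast
  qed
  have uniq: "b = b'" if "a \<in> \<rat>" "b \<in> \<rat>" "a' \<in> \<rat>" "b' \<in> \<rat>" "a + b*w = a' + b'*w" for a b a' b'
  proof (rule ccontr)
    assume bb: "b \<noteq> b'"
    have "(b - b') * w = a' - a" using that(5) by (simp add: algebra_simps)
    hence "w = (a' - a)/(b - b')" using bb by (simp add: field_simps)
    moreover have "(a' - a)/(b - b') \<in> \<rat>" using that by simp
    ultimately show False using wR by simp
  qed
  define cb where "cb x = (SOME b. b \<in> \<rat> \<and> (\<exists>a\<in>\<rat>. x = a + b*w))" for x
  have cb_eq: "cb (a + b*w) = b" if "a \<in> \<rat>" "b \<in> \<rat>" for a b
  proof -
    have ex: "b \<in> \<rat> \<and> (\<exists>a'\<in>\<rat>. a + b*w = a' + b*w)" using that by blast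
    have "cb (a + b*w) \<in> \<rat> \<and> (\<exists>a'\<in>\<rat>. a + b*w = a' + cb (a + b*w) * w)"
      unfolding cb_def by (rule someI, rule ex)
    then obtain a' where "a' \<in> \<rat>" "cb (a + b*w) \<in> \<rat>" "a + b*w = a' + cb (a + b*w) * w" by blast
    thus ?thesis using uniq[OF that] by metis
  qed
  define \<sigma> where "\<sigma> x = x - 2 * cb x * w" for x
  have s_eq: "\<sigma> (a + b*w) = a - b*w" if "a \<in> \<rat>" "b \<in> \<rat>" for a b
    unfolding \<sigma>_def cb_eq[OF that] by (simp add: algebra_simps)
  show ?thesis
  proof (intro exI[of _ \<sigma>] qconj.intro)
    fix x y :: 'a
    obtain a b where ab: "a \<in> \<rat>" "b \<in> \<rat>" "x = a + b*w" using rep by blast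
    obtain c d where cd: "c \<in> \<rat>" "d \<in> \<rat>" "y = c + d*w" using rep by blast
    have sx0: "\<sigma> x = a - b*w" unfolding ab(3) using ab by (intro s_eq) simp_all
    have sy0: "\<sigma> y = c - d*w" unfolding cd(3) using cd by (intro s_eq) simp_all
    have xy: "x + y = (a + c) + (b + d)*w" using ab cd by (simp add: algebra_simps)
    have h: "\<sigma> (x + y) = (a + c) - (b + d)*w" unfolding xy using ab cd by (intro s_eq) simp_all
    show "\<sigma> (x + y) = \<sigma> x + \<sigma> y" by (simp only: h sx0 sy0) (simp add: algebra_simps)
    have xy2: "x * y = (a*c + b*d*D) + (a*d + b*c)*w" using ab cd wD[symmetric]
      by (simp add: algebra_simps)
    have "\<sigma> (x * y) = (a*c + b*d*D) - (a*d + b*c)*w" unfolding xy2 using ab cd DR by (intro s_eq) simp_all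
    moreover have "\<sigma> x * \<sigma> y = (a*c + b*d*D) - (a*d + b*c)*w"
      unfolding sx0 sy0 wD[symmetric] by (simp add: algebra_simps)
    ultimately show "\<sigma> (x * y) = \<sigma> x * \<sigma> y" by simp
    have sx: "\<sigma> x = a + (-b)*w" using sx0 by simp
    have "\<sigma> (\<sigma> x) = a - (-b)*w" unfolding sx using ab by (intro s_eq) simp_all
    thus "\<sigma> (\<sigma> x) = x" using ab by simp
    show "\<sigma> x = x \<longleftrightarrow> x \<in> \<rat>"
    proof
      assume "\<sigma> x = x"
      hence "a - b*w = a + b*w" using sx0 ab by simp
      hence "2*b*w = 0" by (simp add: algebra_simps)
      hence "b = 0" using w_nz by simp
      thus "x \<in> \<rat>" using ab by simp
    next
      assume "x \<in> \<rat>"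
      hence "\<sigma> (x + 0*w) = x - 0*w" by (intro s_eq) simp_all
      thus "\<sigma> x = x" by simp
    qed
  qed
qed



theorem proposition2p1:
  fixes x :: "nat \<Rightarrow> 'a::field_char_0"
  assumes "quadratic_ext_of_rat TYPE('a)"
    and "\<exists>i\<in>{0..3}. x i \<noteq> 0"
    and "\<forall>i\<in>{1,2,3}. \<forall>j\<in>{1,2,3}. x i ^ 2 - x (i - 1) ^ 2 = x j ^ 2 - x (j - 1) ^ 2"
  shows "x 0 \<noteq> 0 \<and>
    (let q = (x 1 / x 0) ^ 2 - 1 in q = 0 \<or> (3 * q + 2) ^ 2 / q ^ 2 \<in> \<rat>)"
proof -
  obtain \<sigma> :: "'a \<Rightarrow> 'a" where "qconj \<sigma>" using quad_conj[OF assms(1)] by blast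
  then interpret qconj \<sigma> .
  have e2: "x 2 ^ 2 - x 1 ^ 2 = x 1 ^ 2 - x 0 ^ 2"
    using bspec[OF bspec[OF assms(3), of 2], of 1] by simp
  have e3: "x 3 ^ 2 - x 2 ^ 2 = x 1 ^ 2 - x 0 ^ 2"
    using bspec[OF bspec[OF assms(3), of 3], of 1] by simp
  have x0: "x 0 \<noteq> 0"
  proof
    assume x00: "x 0 = 0"
    have h2: "x 2 ^ 2 = 2 * x 1 ^ 2" using e2 x00 by simp
    have h3: "x 3 ^ 2 = 3 * x 1 ^ 2" using e3 h2 x00 by simp
    show False
    proof (cases "x 1 = 0")
      case True
      hence "x 2 = 0" "x 3 = 0" using h2 h3 by simp_all
      moreover obtain i where i: "i \<in> {0..3::nat}" "x i \<noteq> 0" using assms(2) by blast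
      moreover have "i = 0 \<or> i = 1 \<or> i = 2 \<or> i = 3" using i(1) by auto
      ultimately show False using True x00 by auto
    next
      case False
      have "(x 2 / x 1)^2 = 2" using h2 False by (simp add: power_divide)
      moreover have "(x 3 / x 1)^2 = 3" using h3 False by (simp add: power_divide)
      ultimately show False using no_sqrt23 by blast
    qed
  qed
  define q where "q = (x 1 / x 0) ^ 2 - 1"
  define a where "a = x 1 / x 0"
  define b where "b = x 2 / x 0"
  define c where "c = x 3 / x 0"
  have a2: "a^2 = 1 + q" unfolding q_def a_def by simp
  have h2': "x 2 ^ 2 = 2 * x 1 ^ 2 - x 0 ^ 2" using e2 by (simp add: algebra_simps)
  have b2: "b^2 = 1 + 2*q"
  proof -
    show ?thesis using h2' unfolding b_def q_def using x0 by (simp add: power_divide field_simps)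
  qed
  have c2: "c^2 = 1 + 3*q"
  proof -
    have "x 3 ^ 2 = (x 3 ^ 2 - x 2 ^ 2) + x 2 ^ 2" by simp
    also have "\<dots> = (x 1 ^ 2 - x 0 ^ 2) + (2 * x 1 ^ 2 - x 0 ^ 2)" by (subst e3) (simp only: h2')
    also have "\<dots> = 3 * x 1 ^ 2 - 2 * x 0 ^ 2" by (simp add: algebra_simps)
    finally show ?thesis unfolding c_def q_def using x0 by (simp add: power_divide field_simps)
  qed
  have "q = 0 \<or> (3 * q + 2) ^ 2 / q ^ 2 \<in> \<rat>"
  proof (cases "q \<in> \<rat>")
    case True thus ?thesis by simp
  next
    case False
    have rel: "3 * q * \<sigma> q + q + \<sigma> q = 0" using key[OF a2 b2 c2 False] .
    have q0: "q \<noteq> 0" using False by auto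
    hence sq0: "\<sigma> q \<noteq> 0" by simp
    have "(3 * \<sigma> q + 2) * q = - ((3 * q + 2) * \<sigma> q)"
    proof -
      have "(3 * \<sigma> q + 2) * q + (3 * q + 2) * \<sigma> q = 2 * (3 * q * \<sigma> q + q + \<sigma> q)"
        by (simp add: algebra_simps)
      also have "\<dots> = 0" using rel by simp
      finally show ?thesis by (simp add: eq_neg_iff_add_eq_0)
    qed
    hence pq: "((3 * \<sigma> q + 2) * q)^2 = ((3 * q + 2) * \<sigma> q)^2" by simp
    have sq: "(3 * \<sigma> q + 2)^2 * q^2 = (3 * q + 2)^2 * (\<sigma> q)^2"
      using pq by (simp only: power_mult_distrib)
    have "(3 * \<sigma> q + 2)^2 / (\<sigma> q)^2 = (3 * q + 2)^2 / q^2"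
      by (subst frac_eq_eq) (simp_all add: sq0 q0 sq)
    hence "\<sigma> ((3 * q + 2) ^ 2 / q ^ 2) = (3 * q + 2) ^ 2 / q ^ 2" by simp
    hence "(3 * q + 2) ^ 2 / q ^ 2 \<in> \<rat>" by (rule s_Rats)
    thus ?thesis by simp
  qed
  thus ?thesis using x0 unfolding q_def Let_def by simp
qed

end
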